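(* For every $\epsilon,\alpha,D,L,A>0$ there exist $\eta,\beta>0$ such that if $X$ and $Y$ are connected graphs with degree bounded by $D$, $X$ has no $\alpha$-small $\epsilon$-Følner set and $f\colon X\to Y$ is an $(L,A)$-quasi-isometry, then $Y$ has no $\beta$-small $\eta$-Følner set.
   Context: Graphs are finite, with no multiple edges nor loops, viewed as metric spaces with the path-length metric. For $S\subseteq X$, $\partial S$ is the set of edges joining $S$ to $X\smallsetminus S$. A non-empty $S\subset X$ is an $\epsilon$-Følner set if $|S|\leq\frac12|X|$ and $|\partial S|\leq\epsilon|S|$; it is $\alpha$-small if $|S|<\alpha|X|$. An $(L,A)$-quasi-isometry is a map $f$ with $\frac1L d_X(x,x')-A\leq d_Y(f(x),f(x'))\leq L d_X(x,x')+A$ and every point of $Y$ within distance $A$ of $f(X)$. *)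

theory Defs
  imports Complex_Main
begin

definition fin_graph :: "'a set \<Rightarrow> ('a \<Rightarrow> 'a \<Rightarrow> bool) \<Rightarrow> bool" where
  "fin_graph V E \<longleftrightarrow> finite V \<and> (\<forall>x y. E x y \<longrightarrow> x \<in> V \<and> y \<in> V)
     \<and> (\<forall>x y. E x y \<longrightarrow> E y x) \<and> (\<forall>x. \<not> E x x)"

definition walk :: "('a \<Rightarrow> 'a \<Rightarrow> bool) \<Rightarrow> 'a list \<Rightarrow> bool" where
  "walk E p \<longleftrightarrow> p \<noteq> [] \<and> (\<forall>i. Suc i < length p \<longrightarrow> E (p ! i) (p ! Suc i))"

definition connected_graph :: "'a set \<Rightarrow> ('a \<Rightarrow> 'a \<Rightarrow> bool) \<Rightarrow> bool" where
  "connected_graph V E \<longleftrightarrow> fin_graph V E \<and> V \<noteq> {} \<and>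
     (\<forall>x\<in>V. \<forall>y\<in>V. \<exists>p. walk E p \<and> hd p = x \<and> last p = y)"

definition gdist :: "('a \<Rightarrow> 'a \<Rightarrow> bool) \<Rightarrow> 'a \<Rightarrow> 'a \<Rightarrow> real" where
  "gdist E x y = real (LEAST n. \<exists>p. walk E p \<and> hd p = x \<and> last p = y \<and> length p = Suc n)"

definition degree_bounded :: "'a set \<Rightarrow> ('a \<Rightarrow> 'a \<Rightarrow> bool) \<Rightarrow> real \<Rightarrow> bool" where
  "degree_bounded V E D \<longleftrightarrow> (\<forall>x\<in>V. real (card {y. E x y}) \<le> D)"

definition edge_boundary :: "'a set \<Rightarrow> ('a \<Rightarrow> 'a \<Rightarrow> bool) \<Rightarrow> 'a set \<Rightarrow> ('a \<times> 'a) set" where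
  "edge_boundary V E S = {(x, y). x \<in> S \<and> y \<in> V - S \<and> E x y}"

definition folner_set :: "'a set \<Rightarrow> ('a \<Rightarrow> 'a \<Rightarrow> bool) \<Rightarrow> real \<Rightarrow> 'a set \<Rightarrow> bool" where
  "folner_set V E \<epsilon> S \<longleftrightarrow> S \<noteq> {} \<and> S \<subseteq> V \<and> real (card S) \<le> real (card V) / 2
     \<and> real (card (edge_boundary V E S)) \<le> \<epsilon> * real (card S)"

definition small_set :: "'a set \<Rightarrow> real \<Rightarrow> 'a set \<Rightarrow> bool" where
  "small_set V \<alpha> S \<longleftrightarrow> real (card S) < \<alpha> * real (card V)"

definition quasi_isometry ::
  "'a set \<Rightarrow> ('a \<Rightarrow> 'a \<Rightarrow> bool) \<Rightarrow> 'b set \<Rightarrow> ('b \<Rightarrow> 'b \<Rightarrow> bool) \<Rightarrow> real \<Rightarrow> real \<Rightarrow> ('a \<Rightarrow> 'b) \<Rightarrow> bool" where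
  "quasi_isometry V E W F L A f \<longleftrightarrow> f ` V \<subseteq> W \<and>
     (\<forall>x\<in>V. \<forall>x'\<in>V. gdist E x x' / L - A \<le> gdist F (f x) (f x')
                    \<and> gdist F (f x) (f x') \<le> L * gdist E x x' + A) \<and>
     (\<forall>y\<in>W. \<exists>x\<in>V. gdist F y (f x) \<le> A)"

end

theory Submission
  imports Defs
begin

fun gball :: "('a \<Rightarrow> 'a \<Rightarrow> bool) \<Rightarrow> nat \<Rightarrow> 'a \<Rightarrow> 'a set" where
  "gball E 0 x = {x}"
| "gball E (Suc n) x = gball E n x \<union> (\<Union>u\<in>{u. E x u}. gball E n u)"

lemma gball_center: "x \<in> gball E n x"
  by (induction n) auto

lemma gball_mono: "n \<le> m \<Longrightarrow> gball E n x \<subseteq> gball E m x"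
proof (induction m)
  case 0 then show ?case by simp
next
  case (Suc m) then show ?case by (auto simp: le_Suc_eq)
qed

lemma gball_trans: "y \<in> gball E n x \<Longrightarrow> z \<in> gball E m y \<Longrightarrow> z \<in> gball E (n+m) x"
proof (induction n arbitrary: x)
  case 0 then show ?case by simp
next
  case (Suc n)
  from Suc.prems(1) show ?case
  proof (cases "y \<in> gball E n x")
    case True
    then have "z \<in> gball E (n+m) x" using Suc by blast
    then show ?thesis using gball_mono[of "n+m" "Suc n + m" E x] by auto
  next
    case False
    with Suc.prems(1) obtain u where "E x u" "y \<in> gball E n u" by auto
    then have "z \<in> gball E (n+m) u" using Suc by blast
    then show ?thesis using \<open>E x u\<close> by auto
  qed
qed

lemma gball_edge: "E x y \<Longrightarrow> y \<in> gball E 1 x"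
  by auto

lemma gball_sym:
  assumes "\<forall>x y. E x y \<longrightarrow> E y x"
  shows "y \<in> gball E n x \<Longrightarrow> x \<in> gball E n y"
proof (induction n arbitrary: x)
  case 0 then show ?case by simp
next
  case (Suc n)
  show ?case
  proof (cases "y \<in> gball E n x")
    case True
    then show ?thesis using Suc gball_mono[of n "Suc n" E y] by auto
  next
    case False
    with Suc.prems obtain u where "E x u" "y \<in> gball E n u" by auto
    then have "u \<in> gball E n y" using Suc.IH by blast
    moreover have "x \<in> gball E 1 u" using \<open>E x u\<close> assms by auto
    ultimately have "x \<in> gball E (n+1) y" by (rule gball_trans)
    then show ?thesis by simp
  qed
qed

lemma nbrs_fin:
  assumes "fin_graph V E" "degree_bounded V E D" "D \<ge> 0"
  shows "finite {u. E x u} \<and> real (card {u. E x u}) \<le> D"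
proof -
  have "{u. E x u} \<subseteq> V" using assms(1) unfolding fin_graph_def by auto
  moreover have "finite V" using assms(1) unfolding fin_graph_def by auto
  ultimately have f: "finite {u. E x u}" by (rule finite_subset)
  show ?thesis
  proof (cases "x \<in> V")
    case True then show ?thesis using f assms(2) unfolding degree_bounded_def by auto
  next
    case False
    then have "{u. E x u} = {}" using assms(1) unfolding fin_graph_def by auto
    then show ?thesis using assms(3) by simp
  qed
qed

lemma card_UN_real:
  assumes "finite I" "\<forall>i\<in>I. finite (A i) \<and> real (card (A i)) \<le> c"
  shows "finite (\<Union>i\<in>I. A i) \<and> real (card (\<Union>i\<in>I. A i)) \<le> real (card I) * c"
proof -
  have "card (\<Union>i\<in>I. A i) \<le> (\<Sum>i\<in>I. card (A i))" using card_UN_le[OF assms(1), of A] by simp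
  then have "real (card (\<Union>i\<in>I. A i)) \<le> (\<Sum>i\<in>I. real (card (A i)))"
    by (metis of_nat_le_iff of_nat_sum)
  also have "\<dots> \<le> (\<Sum>i\<in>I. c)" using assms(2) by (intro sum_mono) auto
  finally show ?thesis using assms by auto
qed

lemma gball_card:
  assumes "fin_graph V E" "degree_bounded V E D" "D \<ge> 0"
  shows "finite (gball E n x) \<and> real (card (gball E n x)) \<le> (D+1)^n"
proof (induction n arbitrary: x)
  case 0 then show ?case by simp
next
  case (Suc n)
  have nb: "finite {u. E x u}" "real (card {u. E x u}) \<le> D" using nbrs_fin[OF assms] by auto
  have U: "finite (\<Union>u\<in>{u. E x u}. gball E n u) \<and>
     real (card (\<Union>u\<in>{u. E x u}. gball E n u)) \<le> real (card {u. E x u}) * (D+1)^n"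
    using card_UN_real[OF nb(1), of "gball E n" "(D+1)^n"] Suc by auto
  have "real (card {u. E x u}) * (D+1)^n \<le> D * (D+1)^n"
    using nb(2) assms(3) by (intro mult_right_mono) auto
  then have U2: "real (card (\<Union>u\<in>{u. E x u}. gball E n u)) \<le> D * (D+1)^n" using U by linarith
  have "card (gball E (Suc n) x) \<le> card (gball E n x) + card (\<Union>u\<in>{u. E x u}. gball E n u)"
    by (simp add: card_Un_le)
  then have "real (card (gball E (Suc n) x)) \<le> real (card (gball E n x)) + real (card (\<Union>u\<in>{u. E x u}. gball E n u))"
    by linarith
  also have "\<dots> \<le> (D+1)^n + D * (D+1)^n" using Suc[of x] U2 by linarith
  also have "\<dots> = (D+1)^Suc n" by (simp add: algebra_simps)
  finally show ?case using Suc[of x] U by simp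
qed

lemma walk_gball: "walk E p \<Longrightarrow> length p = Suc k \<Longrightarrow> last p \<in> gball E k (hd p)"
proof (induction p arbitrary: k)
  case Nil then show ?case by simp
next
  case (Cons a q)
  show ?case
  proof (cases q)
    case Nil then show ?thesis using Cons by (simp add: gball_center)
  next
    case (Cons b r)
    then obtain k' where k: "k = Suc k'" using Cons.prems by (cases k) auto
    have W: "\<forall>i. Suc i < length (a#q) \<longrightarrow> E ((a#q)!i) ((a#q)! Suc i)"
      using Cons.prems(1) unfolding walk_def by blast
    have e: "E a b" using W[rule_format, of 0] \<open>q = b # r\<close> by simp
    have w: "walk E q" unfolding walk_def
    proof (intro conjI allI impI)
      show "q \<noteq> []" using \<open>q = b # r\<close> by simp
      fix i assume "Suc i < length q"
      then have "Suc (Suc i) < length (a#q)" by simp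
      from W[rule_format, OF this] show "E (q ! i) (q ! Suc i)" by simp
    qed
    have "last q \<in> gball E k' b" using Cons.IH[OF w] Cons.prems(2) k \<open>q = b # r\<close> by auto
    then show ?thesis using e k \<open>q = b # r\<close> by auto
  qed
qed

lemma gdist_gball:
  assumes "connected_graph V E" "x \<in> V" "y \<in> V" "gdist E x y \<le> real n"
  shows "y \<in> gball E n x"
proof -
  let ?P = "\<lambda>n. \<exists>p. walk E p \<and> hd p = x \<and> last p = y \<and> length p = Suc n"
  obtain p where p: "walk E p" "hd p = x" "last p = y"
    using assms unfolding connected_graph_def by blast
  have "p \<noteq> []" using p(1) unfolding walk_def by simp
  then have "length p = Suc (length p - 1)" by simp
  then have "?P (length p - 1)" using p by blast
  then have "?P (LEAST n. ?P n)" by (rule LeastI)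
  then obtain q where q: "walk E q" "hd q = x" "last q = y" "length q = Suc (LEAST n. ?P n)" by blast
  have le: "(LEAST n. ?P n) \<le> n" using assms(4) unfolding gdist_def by simp
  have "y \<in> gball E (LEAST n. ?P n) x" using walk_gball[OF q(1) q(4)] q(2,3) by simp
  then show ?thesis using gball_mono[OF le, of E x] by blast
qed

lemma gdist_self: "gdist E x x = 0"
proof -
  have "walk E [x]" by (simp add: walk_def)
  then have "(LEAST n. \<exists>p. walk E p \<and> hd p = x \<and> last p = x \<and> length p = Suc n) = 0"
    by (intro Least_eq_0) force
  then show ?thesis unfolding gdist_def by simp
qed

lemma gdist_edge: "E x y \<Longrightarrow> gdist E x y \<le> 1"
proof -
  assume "E x y"
  then have "walk E [x,y]" by (auto simp: walk_def less_Suc_eq)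
  then have "(LEAST n. \<exists>p. walk E p \<and> hd p = x \<and> last p = y \<and> length p = Suc n) \<le> 1"
    by (intro Least_le) force
  then show ?thesis unfolding gdist_def by simp
qed

lemma gdist_floor: "gdist E x y \<le> c \<Longrightarrow> gdist E x y \<le> real (nat \<lfloor>c\<rfloor>)"
proof -
  assume a: "gdist E x y \<le> c"
  obtain k :: nat where k: "gdist E x y = real k" unfolding gdist_def by blast
  have "int k \<le> \<lfloor>c\<rfloor>" using a k by (simp add: le_floor_iff)
  then have "k \<le> nat \<lfloor>c\<rfloor>" by linarith
  then show ?thesis using k by simp
qed

lemma card_le_via:
  assumes "A \<subseteq> B" "finite B \<and> real (card B) \<le> c"
  shows "finite A \<and> real (card A) \<le> c"
proof -
  have "finite A" using assms finite_subset by blast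
  moreover have "card A \<le> card B" using assms card_mono by blast
  ultimately show ?thesis using assms(2) by linarith
qed

lemma bdry_region:
  assumes "fin_graph W F"
  shows "y \<in> T \<Longrightarrow> z \<in> gball F n y \<Longrightarrow> z \<notin> T \<Longrightarrow> \<exists>u\<in>fst ` edge_boundary W F T. y \<in> gball F n u"
proof (induction n arbitrary: y)
  case 0 then show ?case by simp
next
  case (Suc n)
  show ?case
  proof (cases "z \<in> gball F n y")
    case True
    then obtain u where "u\<in>fst ` edge_boundary W F T" "y \<in> gball F n u" using Suc by blast
    then show ?thesis by auto
  next
    case False
    with Suc.prems obtain w where w: "F y w" "z \<in> gball F n w" by auto
    show ?thesis
    proof (cases "w \<in> T")
      case True
      then obtain u where u: "u\<in>fst ` edge_boundary W F T" "w \<in> gball F n u" using Suc w by blast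
      have "y \<in> gball F 1 w" using w(1) assms unfolding fin_graph_def by auto
      from gball_trans[OF u(2) this] u(1) show ?thesis by auto
    next
      case False
      then have "(y, w) \<in> edge_boundary W F T" using w(1) Suc.prems assms
        unfolding edge_boundary_def fin_graph_def by auto
      then show ?thesis using gball_center[of y F "Suc n"] by force
    qed
  qed
qed


theorem proposition2p6:
  fixes \<epsilon> \<alpha> D L A :: real
  assumes "\<epsilon> > 0" "\<alpha> > 0" "D > 0" "L > 0" "A > 0"
  shows "\<exists>\<eta> \<beta>. \<eta> > 0 \<and> \<beta> > 0 \<and>
    (\<forall>(V :: nat set) E (W :: nat set) F (f :: nat \<Rightarrow> nat).
       connected_graph V E \<and> connected_graph W F \<and>
       degree_bounded V E D \<and> degree_bounded W F D \<and>
       \<not> (\<exists>S. folner_set V E \<epsilon> S \<and> small_set V \<alpha> S) \<and>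
       quasi_isometry V E W F L A f
       \<longrightarrow> \<not> (\<exists>T. folner_set W F \<eta> T \<and> small_set W \<beta> T))"
proof -
  define K where "K = D + 1"
  define a where "a = nat \<lfloor>A\<rfloor>"
  define r where "r = nat \<lfloor>L + A\<rfloor>"
  define m where "m = nat \<lfloor>L * A\<rfloor>"
  define NA where "NA = K ^ a"
  define Nr where "Nr = K ^ r"
  define M where "M = K ^ m"
  have K1: "K \<ge> 1" using assms unfolding K_def by simp
  have NA1: "NA \<ge> 1" unfolding NA_def using K1 by simp
  have Nr1: "Nr \<ge> 1" unfolding Nr_def using K1 by simp
  have M1: "M \<ge> 1" unfolding M_def using K1 by simp
  define \<eta> where "\<eta> = min (1 / (2 * NA)) (\<epsilon> / (2 * D * M * Nr * NA))"
  define \<beta> where "\<beta> = min \<alpha> (1/2) / (M * NA)"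
  have \<eta>pos: "\<eta> > 0" unfolding \<eta>_def using assms NA1 Nr1 M1 by simp
  have \<beta>pos: "\<beta> > 0" unfolding \<beta>_def using assms NA1 M1 by simp
  have \<eta>1: "\<eta> * NA \<le> 1/2"
  proof -
    have "\<eta> \<le> 1/(2*NA)" by (simp add: \<eta>_def)
    then have "\<eta> * NA \<le> 1/(2*NA) * NA" using NA1 by (intro mult_right_mono) auto
    also have "\<dots> = 1/2" using NA1 by simp
    finally show ?thesis .
  qed
  have \<eta>2: "\<eta> * (2 * D * M * Nr * NA) \<le> \<epsilon>"
  proof -
    have p: "2 * D * M * Nr * NA > 0" using assms NA1 Nr1 M1 by simp
    have "\<eta> \<le> \<epsilon> / (2 * D * M * Nr * NA)" unfolding \<eta>_def by simp
    then show ?thesis using p by (simp add: le_divide_eq)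
  qed
  have \<beta>1: "\<beta> * (M * NA) = min \<alpha> (1/2)" unfolding \<beta>_def using NA1 M1 by simp
  have main: "\<not> (\<exists>T. folner_set W F \<eta> T \<and> small_set W \<beta> T)"
    if cV: "connected_graph V E" and cW: "connected_graph W F"
      and dV: "degree_bounded V E D" and dW: "degree_bounded W F D"
      and noS: "\<not> (\<exists>S. folner_set V E \<epsilon> S \<and> small_set V \<alpha> S)"
      and qi: "quasi_isometry V E W F L A f"
    for V :: "nat set" and E W F and f :: "nat \<Rightarrow> nat"
  proof
    assume "\<exists>T. folner_set W F \<eta> T \<and> small_set W \<beta> T"
    then obtain T where fT: "folner_set W F \<eta> T" and sT: "small_set W \<beta> T" by blast
    have gV: "fin_graph V E" and gW: "fin_graph W F" using cV cW unfolding connected_graph_def by auto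
    have finV: "finite V" and finW: "finite W" using gV gW unfolding fin_graph_def by auto
    have symW: "\<forall>x y. F x y \<longrightarrow> F y x" using gW unfolding fin_graph_def by auto
    have TW: "T \<subseteq> W" and Tne: "T \<noteq> {}" using fT unfolding folner_set_def by auto
    have finT: "finite T" using TW finW finite_subset by blast
    have cT1: "real (card T) \<ge> 1" using finT Tne by (simp add: Suc_leI card_gt_0_iff)
    have bT: "real (card (edge_boundary W F T)) \<le> \<eta> * real (card T)"
      using fT unfolding folner_set_def by auto
    have TsW: "real (card T) < \<beta> * real (card W)" using sT unfolding small_set_def by auto
    have fV: "\<forall>x\<in>V. f x \<in> W" using qi unfolding quasi_isometry_def by auto
    have ub: "\<forall>x\<in>V. \<forall>x'\<in>V. gdist F (f x) (f x') \<le> L * gdist E x x' + A"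
      using qi unfolding quasi_isometry_def by auto
    have lb: "\<forall>x\<in>V. \<forall>x'\<in>V. gdist E x x' / L - A \<le> gdist F (f x) (f x')"
      using qi unfolding quasi_isometry_def by auto
    have cov: "\<forall>y\<in>W. \<exists>x\<in>V. gdist F y (f x) \<le> A"
      using qi unfolding quasi_isometry_def by auto
    have D0: "D \<ge> 0" using assms by simp
    have ballV: "finite (gball E n x) \<and> real (card (gball E n x)) \<le> K^n" for n x
      using gball_card[OF gV dV D0] unfolding K_def by blast
    have ballW: "finite (gball F n x) \<and> real (card (gball F n x)) \<le> K^n" for n x
      using gball_card[OF gW dW D0] unfolding K_def by blast
    have fiber: "finite {x\<in>V. f x = y} \<and> real (card {x\<in>V. f x = y}) \<le> M" for y
    proof (cases "{x\<in>V. f x = y} = {}")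
      case True then show ?thesis using M1 by (simp only: True) simp
    next
      case False
      then obtain x0 where x0: "x0 \<in> V" "f x0 = y" by auto
      have "{x\<in>V. f x = y} \<subseteq> gball E m x0"
      proof
        fix x assume x: "x \<in> {x\<in>V. f x = y}"
        have xV: "x \<in> V" and fx: "f x = y" using x by auto
        have "gdist E x0 x / L - A \<le> gdist F (f x0) (f x)" using lb x0(1) xV by blast
        then have "gdist E x0 x / L - A \<le> 0" using x0(2) fx gdist_self[of F y] by simp
        then have "gdist E x0 x \<le> L * A" using assms(4) by (simp add: divide_le_eq mult.commute)
        then have "gdist E x0 x \<le> real m" unfolding m_def by (rule gdist_floor)
        then show "x \<in> gball E m x0" using gdist_gball[OF cV x0(1)] x by auto
      qed
      then show ?thesis using ballV[of m x0] unfolding M_def by (rule card_le_via)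
    qed
    define Bd where "Bd n = {y\<in>T. \<exists>z\<in>W-T. z \<in> gball F n y}" for n
    have finBT: "finite (edge_boundary W F T)"
      by (rule finite_subset[of _ "T \<times> W"]) (use finT finW in \<open>auto simp: edge_boundary_def\<close>)
    have Bd_card: "finite (Bd n) \<and> real (card (Bd n)) \<le> \<eta> * real (card T) * K^n" for n
    proof -
      have sub: "Bd n \<subseteq> (\<Union>u\<in>fst ` edge_boundary W F T. gball F n u)"
      proof
        fix y assume "y \<in> Bd n"
        then obtain z where "y \<in> T" "z \<in> gball F n y" "z \<notin> T" unfolding Bd_def by auto
        from bdry_region[OF gW this] show "y \<in> (\<Union>u\<in>fst ` edge_boundary W F T. gball F n u)" by auto
      qed
      have U: "finite (\<Union>u\<in>fst ` edge_boundary W F T. gball F n u) \<and>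
        real (card (\<Union>u\<in>fst ` edge_boundary W F T. gball F n u)) \<le> real (card (fst ` edge_boundary W F T)) * K^n"
        using card_UN_real[of "fst ` edge_boundary W F T" "gball F n" "K^n"] finBT ballW by auto
      have "real (card (fst ` edge_boundary W F T)) \<le> real (card (edge_boundary W F T))"
        by (simp add: card_image_le finBT)
      also have "\<dots> \<le> \<eta> * real (card T)" by (rule bT)
      finally have "real (card (fst ` edge_boundary W F T)) * K^n \<le> \<eta> * real (card T) * K^n"
        using K1 by (intro mult_right_mono) auto
      then have "finite (\<Union>u\<in>fst ` edge_boundary W F T. gball F n u) \<and>
        real (card (\<Union>u\<in>fst ` edge_boundary W F T. gball F n u)) \<le> \<eta> * real (card T) * K^n"
        using U by linarith
      with sub show ?thesis by (rule card_le_via)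
    qed
    define S where "S = {x\<in>V. f x \<in> T}"
    have SV: "S \<subseteq> V" unfolding S_def by auto
    have finS: "finite S" using SV finV finite_subset by blast
    have inner: "T - Bd a \<subseteq> (\<Union>x\<in>S. gball F a (f x))"
    proof
      fix y assume y: "y \<in> T - Bd a"
      then have yW: "y \<in> W" using TW by auto
      obtain x where x: "x \<in> V" "gdist F y (f x) \<le> A" using cov yW by blast
      have "gdist F y (f x) \<le> real a" unfolding a_def using x(2) by (rule gdist_floor)
      then have fx: "f x \<in> gball F a y" using gdist_gball[OF cW yW] fV x(1) by auto
      have "f x \<in> T" using y fx fV x(1) unfolding Bd_def by auto
      then have "x \<in> S" unfolding S_def using x by auto
      moreover have "y \<in> gball F a (f x)" using gball_sym[OF symW fx] .
      ultimately show "y \<in> (\<Union>x\<in>S. gball F a (f x))" by auto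
    qed
    have inner_card: "real (card (T - Bd a)) \<le> real (card S) * NA"
    proof -
      have U: "finite (\<Union>x\<in>S. gball F a (f x)) \<and> real (card (\<Union>x\<in>S. gball F a (f x))) \<le> real (card S) * K^a"
        using card_UN_real[of S "\<lambda>x. gball F a (f x)" "K^a"] finS ballW by auto
      from card_le_via[OF inner U] show ?thesis unfolding NA_def by blast
    qed
    have "Bd a \<subseteq> T" unfolding Bd_def by auto
    then have "T = Bd a \<union> (T - Bd a)" by auto
    then have "card T = card (Bd a \<union> (T - Bd a))" by simp
    also have "\<dots> \<le> card (Bd a) + card (T - Bd a)" by (rule card_Un_le)
    finally have "card T \<le> card (Bd a) + card (T - Bd a)" .
    then have "real (card T) \<le> \<eta> * real (card T) * NA + real (card S) * NA"
      using Bd_card[of a] inner_card unfolding NA_def by linarith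
    moreover have "\<eta> * real (card T) * NA \<le> real (card T) / 2"
    proof -
      have "\<eta> * real (card T) * NA = (\<eta> * NA) * real (card T)" by (simp add: algebra_simps)
      also have "\<dots> \<le> 1/2 * real (card T)" using \<eta>1 by (intro mult_right_mono) auto
      finally show ?thesis by simp
    qed
    ultimately have TS: "real (card T) \<le> 2 * (real (card S) * NA)" by linarith
    have Sne: "S \<noteq> {}" using TS cT1 by auto
    have ST: "real (card S) \<le> real (card T) * M"
    proof -
      have sub: "S \<subseteq> (\<Union>y\<in>T. {x\<in>V. f x = y})" unfolding S_def by auto
      have U: "finite (\<Union>y\<in>T. {x\<in>V. f x = y}) \<and> real (card (\<Union>y\<in>T. {x\<in>V. f x = y})) \<le> real (card T) * M"
        using card_UN_real[of T "\<lambda>y. {x\<in>V. f x = y}" M] finT fiber by auto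
      from card_le_via[OF sub U] show ?thesis by blast
    qed
    have WV: "real (card W) \<le> real (card V) * NA"
    proof -
      have sub: "W \<subseteq> (\<Union>x\<in>V. gball F a (f x))"
      proof
        fix y assume yW: "y \<in> W"
        obtain x where x: "x \<in> V" "gdist F y (f x) \<le> A" using cov yW by blast
        have "gdist F y (f x) \<le> real a" unfolding a_def using x(2) by (rule gdist_floor)
        then have fx: "f x \<in> gball F a y" using gdist_gball[OF cW yW] fV x(1) by auto
        then show "y \<in> (\<Union>x\<in>V. gball F a (f x))" using gball_sym[OF symW fx] x by auto
      qed
      have U: "finite (\<Union>x\<in>V. gball F a (f x)) \<and> real (card (\<Union>x\<in>V. gball F a (f x))) \<le> real (card V) * K^a"
        using card_UN_real[of V "\<lambda>x. gball F a (f x)" "K^a"] finV ballW by auto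
      from card_le_via[OF sub U] show ?thesis unfolding NA_def by blast
    qed
    have "real (card S) < min \<alpha> (1/2) * real (card V)"
    proof -
      have "real (card S) \<le> real (card T) * M" by (rule ST)
      also have "\<dots> < \<beta> * real (card W) * M" using TsW M1 by simp
      also have "\<dots> \<le> \<beta> * (real (card V) * NA) * M" using WV \<beta>pos M1 by simp
      also have "\<dots> = \<beta> * (M * NA) * real (card V)" by (simp add: algebra_simps)
      also have "\<dots> = min \<alpha> (1/2) * real (card V)" using \<beta>1 by simp
      finally show ?thesis .
    qed
    moreover have "min \<alpha> (1/2) * real (card V) \<le> \<alpha> * real (card V)"
      by (intro mult_right_mono) auto
    moreover have "min \<alpha> (1/2) * real (card V) \<le> 1/2 * real (card V)"
      by (intro mult_right_mono) auto
    ultimately have Ssmall: "real (card S) < \<alpha> * real (card V)" and Shalf: "real (card S) \<le> real (card V) / 2"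
      by linarith+
    define S0 where "S0 = {x\<in>V. f x \<in> Bd r}"
    have bsub: "edge_boundary V E S \<subseteq> (\<Union>x\<in>S0. (\<lambda>y. (x, y)) ` {y. E x y})"
    proof
      fix p assume p: "p \<in> edge_boundary V E S"
      then obtain x x' where px: "p = (x, x')" "x \<in> S" "x' \<in> V - S" "E x x'"
        unfolding edge_boundary_def by auto
      have xV: "x \<in> V" and fxT: "f x \<in> T" using px(2) unfolding S_def by auto
      have x'V: "x' \<in> V" and fx'T: "f x' \<notin> T" using px(3) unfolding S_def by auto
      have "gdist E x x' \<le> 1" using px(4) by (rule gdist_edge)
      then have "L * gdist E x x' \<le> L" using assms(4) by (simp add: mult_left_le)
      moreover have "gdist F (f x) (f x') \<le> L * gdist E x x' + A" using ub xV x'V by blast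
      ultimately have "gdist F (f x) (f x') \<le> L + A" by linarith
      then have "gdist F (f x) (f x') \<le> real r" unfolding r_def by (rule gdist_floor)
      then have "f x' \<in> gball F r (f x)" using gdist_gball[OF cW] fV xV x'V by auto
      then have "f x \<in> Bd r" unfolding Bd_def using fxT fx'T fV x'V by auto
      then have "x \<in> S0" unfolding S0_def using xV by auto
      then show "p \<in> (\<Union>x\<in>S0. (\<lambda>y. (x, y)) ` {y. E x y})" using px by auto
    qed
    have S0card: "finite S0 \<and> real (card S0) \<le> real (card (Bd r)) * M"
    proof -
      have sub: "S0 \<subseteq> (\<Union>y\<in>Bd r. {x\<in>V. f x = y})" unfolding S0_def by auto
      have U: "finite (\<Union>y\<in>Bd r. {x\<in>V. f x = y}) \<and> real (card (\<Union>y\<in>Bd r. {x\<in>V. f x = y})) \<le> real (card (Bd r)) * M"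
        using card_UN_real[of "Bd r" "\<lambda>y. {x\<in>V. f x = y}" M] Bd_card fiber by auto
      from card_le_via[OF sub U] show ?thesis .
    qed
    have "finite (\<Union>x\<in>S0. (\<lambda>y. (x, y)) ` {y. E x y}) \<and>
      real (card (\<Union>x\<in>S0. (\<lambda>y. (x, y)) ` {y. E x y})) \<le> real (card S0) * D"
    proof (rule card_UN_real)
      show "finite S0" using S0card by blast
      show "\<forall>i\<in>S0. finite ((\<lambda>y. (i, y)) ` {y. E i y}) \<and> real (card ((\<lambda>y. (i, y)) ` {y. E i y})) \<le> D"
      proof
        fix i
        have nb: "finite {y. E i y}" "real (card {y. E i y}) \<le> D" using nbrs_fin[OF gV dV D0] by auto
        then show "finite ((\<lambda>y. (i, y)) ` {y. E i y}) \<and> real (card ((\<lambda>y. (i, y)) ` {y. E i y})) \<le> D"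
        proof -
          have "card ((\<lambda>y. (i, y)) ` {y. E i y}) \<le> card {y. E i y}" by (rule card_image_le[OF nb(1)])
          then show ?thesis using nb by simp
        qed
      qed
    qed
    then have bS1: "real (card (edge_boundary V E S)) \<le> real (card S0) * D"
      using card_le_via[OF bsub] by blast
    have "real (card (edge_boundary V E S)) \<le> \<epsilon> * real (card S)"
    proof -
      have "real (card (edge_boundary V E S)) \<le> real (card S0) * D" by (rule bS1)
      also have "\<dots> \<le> real (card (Bd r)) * M * D" using S0card D0 by (intro mult_right_mono) auto
      also have "\<dots> \<le> \<eta> * real (card T) * Nr * M * D"
        using Bd_card[of r] M1 D0 unfolding Nr_def by (intro mult_right_mono) auto
      also have "\<dots> \<le> \<eta> * (2 * (real (card S) * NA)) * Nr * M * D"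
        using TS \<eta>pos Nr1 M1 D0 by (intro mult_right_mono) auto
      also have "\<dots> = (\<eta> * (2 * D * M * Nr * NA)) * real (card S)" by (simp add: algebra_simps)
      also have "\<dots> \<le> \<epsilon> * real (card S)" using \<eta>2 by (intro mult_right_mono) auto
      finally show ?thesis .
    qed
    then have "folner_set V E \<epsilon> S \<and> small_set V \<alpha> S"
      unfolding folner_set_def small_set_def using Sne SV Shalf Ssmall by auto
    then show False using noS by blast
  qed
  show ?thesis using \<eta>pos \<beta>pos main by blast
qed

end
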